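(* Let $N, P, T$ be positive integers and let $0 < a < 1$, $b > 0$, $\epsilon > 0$. For $t = 1, \dots, T$ let $A(t) \in \mathbb{R}^{N \times N}$ satisfy $\|A(t)\|_2 \le a \cdot e^{t-T}$, let $B \in \mathbb{R}^{N \times P}$ satisfy $\|B\|_2 \le b$, let $x(t) \in \mathbb{R}^{P \times 1}$ be arbitrary inputs, and let $\delta_x(t) \in \mathbb{R}^{P \times 1}$ satisfy $\|\delta_x(t)\|_2 \le \epsilon$; set $\overline{x}(t) = x(t) + \delta_x(t)$. Define the state sequences $h(t), \overline{h}(t) \in \mathbb{R}^{N \times 1}$ by $h(0) = \overline{h}(0) = 0$ and, for $1 \le t \le T$, $$h(t) = A(t)\, h(t-1) + B\, x(t), \qquad \overline{h}(t) = A(t)\, \overline{h}(t-1) + B\, \overline{x}(t).$$ Let $\Delta(t) = \overline{h}(t) - h(t)$. Then for every $1 \le t \le T$, $$\|\Delta(t)\|_2 \le \epsilon b \left( \frac{1}{1 - a e^{t-T}} \right),$$ and consequently $\|\Delta(T)\|_2 \le \dfrac{\epsilon b}{1-a}$.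
   Context: $\|\cdot\|_2$ denotes the Euclidean norm for vectors and the spectral norm (operator 2-norm) for matrices. The sequence $\overline{h}$ models the state of the recurrence when the input at each step carries a quantization error $\delta_x(t)$. *)

theory Defs
  imports "HOL-Analysis.Analysis"
begin

definition spec_norm :: "real^'m^'n \<Rightarrow> real" where
  "spec_norm M = onorm (\<lambda>v. M *v v)"

primrec state_seq :: "(nat \<Rightarrow> real^'n^'n) \<Rightarrow> real^'p^'n \<Rightarrow> (nat \<Rightarrow> real^'p) \<Rightarrow> nat \<Rightarrow> real^'n" where
  "state_seq A B u 0 = 0"
| "state_seq A B u (Suc t) = A (Suc t) *v state_seq A B u t + B *v u (Suc t)"

end

theory Submission
  imports Defs
begin

lemma mv_bound: "norm (M *v v) \<le> spec_norm M * norm v"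
  unfolding spec_norm_def
  by (rule onorm) (simp add: matrix_vector_mul_bounded_linear)

lemma diff_step:
  "state_seq A B (\<lambda>s. x s + \<delta> s) (Suc t) - state_seq A B x (Suc t)
   = A (Suc t) *v (state_seq A B (\<lambda>s. x s + \<delta> s) t - state_seq A B x t) + B *v \<delta> (Suc t)"
  by (simp add: matrix_vector_mult_diff_distrib matrix_vector_right_distrib algebra_simps)

theorem mainTheorem1:
  fixes T :: nat and a b \<epsilon> :: real
    and A :: "nat \<Rightarrow> real^'n::finite^'n"
    and B :: "real^'p::finite^'n"
    and x \<delta> :: "nat \<Rightarrow> real^'p"
  assumes "T \<ge> 1" and "0 < a" and "a < 1" and "b > 0" and "\<epsilon> > 0"
    and "\<And>t. 1 \<le> t \<Longrightarrow> t \<le> T \<Longrightarrow> spec_norm (A t) \<le> a * exp (real t - real T)"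
    and "spec_norm B \<le> b"
    and "\<And>t. 1 \<le> t \<Longrightarrow> t \<le> T \<Longrightarrow> norm (\<delta> t) \<le> \<epsilon>"
  shows "(\<forall>t. 1 \<le> t \<and> t \<le> T \<longrightarrow>
            norm (state_seq A B (\<lambda>s. x s + \<delta> s) t - state_seq A B x t)
              \<le> \<epsilon> * b * (1 / (1 - a * exp (real t - real T))))
       \<and> norm (state_seq A B (\<lambda>s. x s + \<delta> s) T - state_seq A B x T) \<le> \<epsilon> * b / (1 - a)"
proof -
  define D where "D t = state_seq A B (\<lambda>s. x s + \<delta> s) t - state_seq A B x t" for t
  define al where "al t = a * exp (real t - real T)" for t
  have al_pos: "al t > 0" for t using assms(2) by (simp add: al_def)
  have al_lt: "al t < 1" if "t \<le> T" for t
  proof -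
    have "exp (real t - real T) \<le> 1" using that by simp
    hence "al t \<le> a" using assms(2) unfolding al_def
      by (simp add: mult_left_le)
    thus ?thesis using assms(3) by simp
  qed
  have al_mono: "al t \<le> al (Suc t)" for t
    unfolding al_def using assms(2) by simp
  have D0: "D 0 = 0" by (simp add: D_def)
  have DS: "D (Suc t) = A (Suc t) *v D t + B *v \<delta> (Suc t)" for t
    unfolding D_def by (rule diff_step)
  have step: "norm (D (Suc t)) \<le> al (Suc t) * norm (D t) + \<epsilon> * b" if "Suc t \<le> T" for t
  proof -
    have "norm (D (Suc t)) \<le> norm (A (Suc t) *v D t) + norm (B *v \<delta> (Suc t))"
      unfolding DS by (rule norm_triangle_ineq)
    also have "norm (A (Suc t) *v D t) \<le> al (Suc t) * norm (D t)"
      using mv_bound[of "A (Suc t)" "D t"] assms(6)[of "Suc t"] that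
      by (simp add: al_def) (meson mult_right_mono norm_ge_zero order_trans)
    also have "norm (B *v \<delta> (Suc t)) \<le> \<epsilon> * b"
    proof -
      have "norm (B *v \<delta> (Suc t)) \<le> spec_norm B * norm (\<delta> (Suc t))" by (rule mv_bound)
      also have "\<dots> \<le> b * \<epsilon>"
        using assms(7) assms(8)[of "Suc t"] that assms(4)
        by (simp add: mult_mono)
      finally show ?thesis by (simp add: mult.commute)
    qed
    finally show ?thesis by simp
  qed
  have main: "1 \<le> t \<longrightarrow> t \<le> T \<longrightarrow> norm (D t) \<le> \<epsilon> * b / (1 - al t)" for t
  proof (induction t)
    case 0 then show ?case by simp
  next
    case (Suc t)
    show ?case
    proof (intro impI)
      assume h: "Suc t \<le> T"
      have eb: "\<epsilon> * b > 0" using assms(4,5) by simp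
      have l1: "al (Suc t) < 1" using al_lt h by blast
      have l0: "al t < 1" using al_lt h by simp
      have IHb: "norm (D t) \<le> \<epsilon> * b / (1 - al (Suc t))"
      proof (cases t)
        case 0 then show ?thesis using D0 eb l1 by simp
      next
        case (Suc m)
        then have "norm (D t) \<le> \<epsilon> * b / (1 - al t)" using Suc.IH h by simp
        also have "\<dots> \<le> \<epsilon> * b / (1 - al (Suc t))"
          using eb l0 l1 al_mono[of t] by (intro divide_left_mono) (auto simp: mult_pos_pos)
        finally show ?thesis .
      qed
      have "norm (D (Suc t)) \<le> al (Suc t) * norm (D t) + \<epsilon> * b" using step h by blast
      also have "\<dots> \<le> al (Suc t) * (\<epsilon> * b / (1 - al (Suc t))) + \<epsilon> * b"
        using IHb al_pos[of "Suc t"] by (intro add_right_mono mult_left_mono) auto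
      also have "\<dots> = \<epsilon> * b / (1 - al (Suc t))"
        using l1 by (simp add: field_simps)
      finally show "norm (D (Suc t)) \<le> \<epsilon> * b / (1 - al (Suc t))" .
    qed
  qed
  have alT: "al T = a" by (simp add: al_def)
  have P1: "\<forall>t. 1 \<le> t \<and> t \<le> T \<longrightarrow> norm (D t) \<le> \<epsilon> * b * (1 / (1 - al t))"
    using main by simp
  have P2: "norm (D T) \<le> \<epsilon> * b / (1 - a)"
    using main[of T] assms(1) alT by simp
  show ?thesis
    using P1 P2 unfolding D_def al_def by blast
qed

end
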